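(* Let $I\subseteq\mathbb{K}[x_1,\dots,x_d]$ be an ideal generated by at most $d-1$ pure difference binomials. There exists a non-trivial linear loop such that every polynomial $p\in I$ is an invariant of the loop.
   Context: $\mathbb{K}=\overline{\mathbb{Q}}$. A pure difference binomial is $\bm{x}^{\bm{\alpha}}-\bm{x}^{\bm{\beta}}$ with $\bm{\alpha},\bm{\beta}\in\mathbb{N}^d$. A linear loop with initial vector $\bm{s}\in\mathbb{Q}^d$ and update matrix $M\in\mathbb{Q}^{d\times d}$ has orbit $\{M^n\bm{s} : n\ge0\}$; a polynomial $P$ is an invariant if $P(M^n\bm{s})=0$ for all $n\ge0$. The loop is non-trivial if its orbit is an infinite set. *)

theory Defs
  imports "HOL-Library.Poly_Mapping" "HOL-Computational_Algebra.Polynomial" "Jordan_Normal_Form.Matrix"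
begin

text \<open>Multivariate polynomials: finitely supported maps from monomials (exponent vectors
  nat-to-nat maps; variable x_(i+1) is index i) to coefficients.  The field K (algebraic
  closure of Q) is realised as the algebraic complex numbers.\<close>
type_synonym 'a mpoly = "(nat \<Rightarrow>\<^sub>0 nat) \<Rightarrow>\<^sub>0 'a"

definition mpoly_eval :: "complex mpoly \<Rightarrow> (nat \<Rightarrow> complex) \<Rightarrow> complex" where
  "mpoly_eval p x = (\<Sum>m\<in>Poly_Mapping.keys p. Poly_Mapping.lookup p m * (\<Prod>i\<in>Poly_Mapping.keys m. x i ^ Poly_Mapping.lookup m i))"

definition in_Kpoly :: "nat \<Rightarrow> complex mpoly \<Rightarrow> bool" where
  "in_Kpoly d p \<longleftrightarrow> (\<forall>m\<in>Poly_Mapping.keys p. algebraic (Poly_Mapping.lookup p m) \<and> Poly_Mapping.keys m \<subseteq> {..<d})"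

definition pure_diff_binomial :: "(nat \<Rightarrow>\<^sub>0 nat) \<Rightarrow> (nat \<Rightarrow>\<^sub>0 nat) \<Rightarrow> complex mpoly" where
  "pure_diff_binomial \<alpha> \<beta> = Poly_Mapping.single \<alpha> 1 - Poly_Mapping.single \<beta> 1"

definition generated_ideal :: "nat \<Rightarrow> complex mpoly list \<Rightarrow> complex mpoly set" where
  "generated_ideal d gs = {(\<Sum>i<length gs. q i * gs ! i) | q. \<forall>i<length gs. in_Kpoly d (q i)}"

definition loop_orbit :: "rat mat \<Rightarrow> rat vec \<Rightarrow> rat vec set" where
  "loop_orbit M s = {M ^\<^sub>m n *\<^sub>v s | n. True}"

definition nontrivial_loop :: "rat mat \<Rightarrow> rat vec \<Rightarrow> bool" where
  "nontrivial_loop M s \<longleftrightarrow> infinite (loop_orbit M s)"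

definition is_invariant :: "rat mat \<Rightarrow> rat vec \<Rightarrow> complex mpoly \<Rightarrow> bool" where
  "is_invariant M s p \<longleftrightarrow> (\<forall>n. mpoly_eval p (\<lambda>i. of_rat ((M ^\<^sub>m n *\<^sub>v s) $ i)) = 0)"

end

theory Submission
  imports Defs "Jordan_Normal_Form.Determinant"
begin


definition mon :: "(nat \<Rightarrow> complex) \<Rightarrow> (nat \<Rightarrow>\<^sub>0 nat) \<Rightarrow> complex" where
  "mon x m = (\<Prod>i\<in>Poly_Mapping.keys m. x i ^ Poly_Mapping.lookup m i)"

lemma mon_superset: "finite S \<Longrightarrow> Poly_Mapping.keys m \<subseteq> S \<Longrightarrow> mon x m = (\<Prod>i\<in>S. x i ^ Poly_Mapping.lookup m i)"
  unfolding mon_def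
  by (rule prod.mono_neutral_left) (auto simp: in_keys_iff)

lemma mon_add: "mon x (a + b) = mon x a * mon x b"
proof -
  let ?S = "Poly_Mapping.keys a \<union> Poly_Mapping.keys b"
  have f: "finite ?S" by simp
  have "mon x (a + b) = (\<Prod>i\<in>?S. x i ^ Poly_Mapping.lookup (a+b) i)"
    by (rule mon_superset[OF f]) (rule keys_add)
  also have "\<dots> = (\<Prod>i\<in>?S. x i ^ Poly_Mapping.lookup a i) * (\<Prod>i\<in>?S. x i ^ Poly_Mapping.lookup b i)"
    by (simp add: lookup_add power_add prod.distrib)
  also have "\<dots> = mon x a * mon x b"
    using mon_superset[OF f, of a x] mon_superset[OF f, of b x] by simp
  finally show ?thesis .
qed

lemma eval_superset: "finite S \<Longrightarrow> Poly_Mapping.keys p \<subseteq> S \<Longrightarrow>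
   mpoly_eval p x = (\<Sum>m\<in>S. Poly_Mapping.lookup p m * mon x m)"
  unfolding mpoly_eval_def mon_def[symmetric]
  by (rule sum.mono_neutral_left) (auto simp: in_keys_iff)

lemma eval_add: "mpoly_eval (p + q) x = mpoly_eval p x + mpoly_eval q x"
proof -
  let ?S = "Poly_Mapping.keys p \<union> Poly_Mapping.keys q"
  have f: "finite ?S" by simp
  show ?thesis
    using eval_superset[OF f, of p x] eval_superset[OF f, of q x] eval_superset[OF f, of "p+q" x] keys_add[of p q]
    by (simp add: lookup_add distrib_right sum.distrib)
qed

lemma eval_zero[simp]: "mpoly_eval 0 x = 0"
  by (simp add: mpoly_eval_def)

lemma eval_diff: "mpoly_eval (p - q) x = mpoly_eval p x - mpoly_eval q x"
  using eval_add[of "p - q" q x] by simp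

lemma eval_sum: "mpoly_eval (\<Sum>i\<in>I. f i) x = (\<Sum>i\<in>I. mpoly_eval (f i) x)"
  by (induction I rule: infinite_finite_induct) (auto simp: eval_add)

lemma eval_single: "mpoly_eval (Poly_Mapping.single m c) x = c * mon x m"
  by (cases "c = 0") (auto simp: mpoly_eval_def mon_def)

lemma decomp: "p = (\<Sum>m\<in>Poly_Mapping.keys p. Poly_Mapping.single m (Poly_Mapping.lookup p m))"
  by (rule poly_mapping_eqI) (auto simp: lookup_sum lookup_single when_def in_keys_iff)

lemma eval_mult: "mpoly_eval (p * q) x = mpoly_eval p x * mpoly_eval q x"
proof -
  have "p * q = (\<Sum>m\<in>Poly_Mapping.keys p. \<Sum>n\<in>Poly_Mapping.keys q.
      Poly_Mapping.single m (Poly_Mapping.lookup p m) * Poly_Mapping.single n (Poly_Mapping.lookup q n))"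
    apply (subst decomp[of p], subst decomp[of q])
    apply (simp add: sum_distrib_left sum_distrib_right)
    by (rule sum.swap)
  then have "mpoly_eval (p * q) x = (\<Sum>m\<in>Poly_Mapping.keys p. \<Sum>n\<in>Poly_Mapping.keys q.
      (Poly_Mapping.lookup p m * mon x m) * (Poly_Mapping.lookup q n * mon x n))"
    by (simp add: eval_sum mult_single eval_single mon_add mult_ac)
  also have "\<dots> = mpoly_eval p x * mpoly_eval q x"
    by (simp add: mpoly_eval_def mon_def sum_product)
  finally show ?thesis .
qed



lemma diag_pow:
  "mat d d (\<lambda>(i,j). if i = j then c i else (0::'a::comm_semiring_1)) ^\<^sub>m n
   = mat d d (\<lambda>(i,j). if i = j then c i ^ n else 0)"
proof (induction n)
  case 0 then show ?case by (auto simp: one_mat_def)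
next
  case (Suc n)
  show ?case
  proof (rule eq_matI)
    fix i j assume i: "i < dim_row (mat d d (\<lambda>(i,j). if i = j then c i ^ Suc n else (0::'a)))"
      and j: "j < dim_col (mat d d (\<lambda>(i,j). if i = j then c i ^ Suc n else (0::'a)))"
    have "(\<Sum>k = 0..<d. (if i = k then c i ^ n else 0) * (if k = j then c k else (0::'a)))
       = (\<Sum>k \<in> {0..<d}. if k = i then (if i = j then c i ^ n * c i else 0) else 0)"
      by (rule sum.cong) auto
    also have "\<dots> = (if i = j then c i ^ Suc n else 0)" using i by (simp add: mult.commute)
    finally show "(mat d d (\<lambda>(i,j). if i = j then c i else 0) ^\<^sub>m Suc n) $$ (i, j) =
         mat d d (\<lambda>(i,j). if i = j then c i ^ Suc n else 0) $$ (i, j)"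
      using i j Suc by (simp add: scalar_prod_def)
  qed auto
qed

lemma diag_pow_vec:
  assumes "i < d"
  shows "(mat d d (\<lambda>(i,j). if i = j then c i else (0::'a::comm_semiring_1)) ^\<^sub>m n *\<^sub>v vec d (\<lambda>_. 1)) $ i = c i ^ n"
proof -
  have "(\<Sum>k = 0..<d. (if i = k then c i ^ n else 0) * (1::'a)) = (\<Sum>k \<in> {0..<d}. if k = i then c i ^ n else 0)"
    by (rule sum.cong) auto
  then show ?thesis using assms by (simp add: diag_pow scalar_prod_def)
qed

lemma kernel_vec:
  fixes A :: "int mat"
  assumes A: "A \<in> carrier_mat d d" and k: "k < d" and zr: "\<forall>j<d. A $$ (k, j) = 0"
  shows "\<exists>w. w \<in> carrier_vec d \<and> w \<noteq> 0\<^sub>v d \<and> A *\<^sub>v w = 0\<^sub>v d"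
proof -
  have eq: "A = mat\<^sub>r d d (\<lambda>i. if i = k then 0\<^sub>v d else row A i)"
    using A zr by (intro eq_matI) auto
  have "det A = 0"
    by (subst eq, rule det_row_0[OF k]) (use A in auto)
  then show ?thesis using det_0_iff_vec_prod_zero[OF A] by blast
qed

lemma prod_powi: fixes d :: nat and w :: "nat \<Rightarrow> int" and a :: "nat \<Rightarrow> nat" shows "(\<Prod>i<d. ((2::rat) powi w i) ^ a i) = 2 powi (\<Sum>i<d. int (a i) * w i)"
proof (induction d)
  case 0 then show ?case by simp
next
  case (Suc d)
  then show ?case
    by (simp add: power_int_add power_int_mult mult.commute power_int_mult_distrib flip: power_int_of_nat)
qed



lemma mon_orbit:
  fixes wi :: "nat \<Rightarrow> int"
  assumes "Poly_Mapping.keys \<alpha> \<subseteq> {..<d}"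
  shows "mon (\<lambda>i. of_rat ((mat d d (\<lambda>(i,j). if i = j then (2::rat) powi wi i else 0) ^\<^sub>m n *\<^sub>v vec d (\<lambda>_. 1)) $ i)) \<alpha>
     = of_rat ((2 powi (\<Sum>i<d. int (Poly_Mapping.lookup \<alpha> i) * wi i)) ^ n)"
proof -
  have "mon (\<lambda>i. of_rat ((mat d d (\<lambda>(i,j). if i = j then (2::rat) powi wi i else 0) ^\<^sub>m n *\<^sub>v vec d (\<lambda>_. 1)) $ i)) \<alpha>
     = (\<Prod>i<d. of_rat (((2::rat) powi wi i) ^ n) ^ Poly_Mapping.lookup \<alpha> i)"
    by (subst mon_superset[OF _ assms]) (auto simp: diag_pow_vec simp del: index_mult_mat_vec intro!: prod.cong)
  also have "\<dots> = of_rat ((\<Prod>i<d. ((2::rat) powi wi i) ^ Poly_Mapping.lookup \<alpha> i) ^ n)"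
    by (simp add: of_rat_prod of_rat_power prod_power_distrib flip: power_mult) (simp add: mult.commute)
  also have "\<dots> = of_rat ((2 powi (\<Sum>i<d. int (Poly_Mapping.lookup \<alpha> i) * wi i)) ^ n)"
    by (simp add: prod_powi)
  finally show ?thesis .
qed

lemma infinite_pow: "(c::rat) > 1 \<Longrightarrow> infinite (range (\<lambda>n::nat. c ^ n))"
proof
  assume c: "c > 1" and f: "finite (range (\<lambda>n::nat. c ^ n))"
  have "inj (\<lambda>n::nat. c ^ n)"
    by (rule strict_mono_imp_inj_on) (simp add: strict_mono_def c power_strict_increasing)
  then have "finite (UNIV :: nat set)" using f finite_imageD by blast
  then show False by simp
qed



theorem theorem5p1:
  fixes d :: nat and G :: "((nat \<Rightarrow>\<^sub>0 nat) \<times> (nat \<Rightarrow>\<^sub>0 nat)) list"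
  assumes "d \<ge> 1"
    and "length G \<le> d - 1"
    and "\<forall>(\<alpha>, \<beta>)\<in>set G. Poly_Mapping.keys \<alpha> \<subseteq> {..<d} \<and> Poly_Mapping.keys \<beta> \<subseteq> {..<d}"
  shows "\<exists>M s. M \<in> carrier_mat d d \<and> s \<in> carrier_vec d \<and> nontrivial_loop M s \<and>
           (\<forall>p\<in>generated_ideal d (map (\<lambda>(\<alpha>, \<beta>). pure_diff_binomial \<alpha> \<beta>) G).
              is_invariant M s p)"
proof -
  define A :: "int mat" where "A = mat d d (\<lambda>(i,j). if i < length G then
     int (Poly_Mapping.lookup (fst (G!i)) j) - int (Poly_Mapping.lookup (snd (G!i)) j) else 0)"
  have Ac: "A \<in> carrier_mat d d" by (simp add: A_def)
  obtain w0 where w0: "w0 \<in> carrier_vec d" "w0 \<noteq> 0\<^sub>v d" "A *\<^sub>v w0 = 0\<^sub>v d"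
    using kernel_vec[OF Ac, of "d - 1"] assms(1,2) by (auto simp: A_def)
  obtain j where j: "j < d" "w0 $ j \<noteq> 0"
    using w0(1,2) by (metis carrier_vecD eq_vecI index_zero_vec(1,2))
  define sg :: int where "sg = (if w0 $ j > 0 then 1 else -1)"
  define wi where "wi i = sg * w0 $ i" for i
  have wj: "wi j > 0" using j(2) by (auto simp: wi_def sg_def)
  have ker: "(\<Sum>k<d. int (Poly_Mapping.lookup \<alpha> k) * wi k) = (\<Sum>k<d. int (Poly_Mapping.lookup \<beta> k) * wi k)"
    if ab: "(\<alpha>, \<beta>) \<in> set G" for \<alpha> \<beta>
  proof -
    obtain i where i: "i < length G" "G ! i = (\<alpha>, \<beta>)" using ab by (auto simp: in_set_conv_nth)
    have id: "i < d" using i assms(1,2) by linarith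
    have "(A *\<^sub>v w0) $ i = 0" using w0(3) id by simp
    then have "(\<Sum>k\<in>{0..<d}. A $$ (i, k) * w0 $ k) = 0"
      using id Ac w0(1) by (simp add: scalar_prod_def)
    then have "(\<Sum>k<d. (int (Poly_Mapping.lookup \<alpha> k) - int (Poly_Mapping.lookup \<beta> k)) * w0 $ k) = 0"
      using i id by (simp add: A_def atLeast0LessThan)
    then have "sg * (\<Sum>k<d. (int (Poly_Mapping.lookup \<alpha> k) - int (Poly_Mapping.lookup \<beta> k)) * w0 $ k) = 0"
      by simp
    then have "(\<Sum>k<d. int (Poly_Mapping.lookup \<alpha> k) * wi k - int (Poly_Mapping.lookup \<beta> k) * wi k) = 0"
      by (simp add: sum_distrib_left wi_def algebra_simps)
    then show ?thesis by (simp add: sum_subtractf)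
  qed
  define M where "M = mat d d (\<lambda>(i,j). if i = j then (2::rat) powi wi i else 0)"
  define s :: "rat vec" where "s = vec d (\<lambda>_. 1)"
  have inv: "is_invariant M s p"
    if p: "p \<in> generated_ideal d (map (\<lambda>(\<alpha>, \<beta>). pure_diff_binomial \<alpha> \<beta>) G)" for p
    unfolding is_invariant_def
  proof
    fix n
    let ?x = "\<lambda>i. of_rat ((M ^\<^sub>m n *\<^sub>v s) $ i)"
    have b0: "mpoly_eval (map (\<lambda>(\<alpha>, \<beta>). pure_diff_binomial \<alpha> \<beta>) G ! i) ?x = 0"
      if i: "i < length G" for i
    proof -
      obtain \<alpha> \<beta> where ab: "G ! i = (\<alpha>, \<beta>)" by fastforce
      have mem: "(\<alpha>, \<beta>) \<in> set G" using i ab by (metis nth_mem)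
      then have ks: "Poly_Mapping.keys \<alpha> \<subseteq> {..<d}" "Poly_Mapping.keys \<beta> \<subseteq> {..<d}"
        using assms(3) by auto
      show ?thesis
        using i ab ker[OF mem] mon_orbit[OF ks(1), of wi n] mon_orbit[OF ks(2), of wi n]
        by (simp add: pure_diff_binomial_def eval_diff eval_single M_def s_def)
    qed
    obtain q where "p = (\<Sum>i<length G. q i * map (\<lambda>(\<alpha>, \<beta>). pure_diff_binomial \<alpha> \<beta>) G ! i)"
      using p by (auto simp: generated_ideal_def)
    then show "mpoly_eval p ?x = 0"
      by (simp add: eval_sum eval_mult b0 del: nth_map)
  qed
  have nt: "nontrivial_loop M s"
    unfolding nontrivial_loop_def
  proof
    assume f: "finite (loop_orbit M s)"
    have "range (\<lambda>n::nat. ((2::rat) powi wi j) ^ n) \<subseteq> (\<lambda>v. v $ j) ` loop_orbit M s"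
    proof
      fix y assume "y \<in> range (\<lambda>n::nat. ((2::rat) powi wi j) ^ n)"
      then obtain n where y: "y = ((2::rat) powi wi j) ^ n" by auto
      have "(M ^\<^sub>m n *\<^sub>v s) $ j = y" using j(1) y by (simp add: M_def s_def diag_pow_vec del: index_mult_mat_vec)
      moreover have "M ^\<^sub>m n *\<^sub>v s \<in> loop_orbit M s" by (auto simp: loop_orbit_def)
      ultimately show "y \<in> (\<lambda>v. v $ j) ` loop_orbit M s" by force
    qed
    moreover have "(2::rat) powi wi j > 1"
    proof -
      have "(2::rat) powi wi j = 2 ^ nat (wi j)" using wj by (simp add: power_int_def)
      also have "\<dots> > 1" using wj by simp
      finally show ?thesis .
    qed
    ultimately show False using infinite_pow f by (meson finite_imageI finite_subset)
  qed
  show ?thesis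
    by (rule exI[of _ M], rule exI[of _ s]) (use inv nt in \<open>auto simp: M_def s_def\<close>)
qed

end
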